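(* Fix a target task and the data below, let $\mathcal{S}\subset\mathcal{P}(\mathcal{X}_S)\times A_S$ be a set of source tasks, and for $(\mu,f)\in\mathcal{S}$ let $$\mathcal{C}(\mu,f):=\inf_{T_0^X\in\mathbb{T}_0^X,\;T_0^Y\in\mathbb{T}_0^Y} C\Big(\mathcal{E}^O\big(T_0^Y(\cdot,f(T_0^X(\cdot)))\big),\;D\big(T_0^X\#\mathrm{Law}(X_T),\mu\big)\Big).$$ Assume there is $L_Y>0$ such that for every $T_0^Y\in\mathbb{T}_0^Y$, $\|T_0^Y(x_1,y_1)-T_0^Y(x_2,y_2)\|_{\mathcal{Y}_T}\le L_Y(\|x_1-x_2\|_{\mathcal{X}_T}+\|y_1-y_2\|_{\mathcal{Y}_S})$ for all $(x_1,y_1),(x_2,y_2)\in\mathcal{X}_T\times\mathcal{Y}_S$, and there are $L'>0$, $p\ge1$ with $|\mathcal{E}^O(h_1)-\mathcal{E}^O(h_2)|\le L'\,\mathcal{W}_p(h_1\#\mathrm{Law}(X_T),h_2\#\mathrm{Law}(X_T))^p$ for all intermediate models $h_1,h_2$, i.e. all functions $x\mapsto T_0^Y(x,f(T_0^X(x)))$ with $f\in A_S$, $T_0^X\in\mathbb{T}_0^X$, $T_0^Y\in\mathbb{T}_0^Y$. Then $\mathcal{C}$ is continuous on the metric space $(\mathcal{S},d_S)$, where $d_S((\mu_1,f_1),(\mu_2,f_2)):=D(\mu_1,\mu_2)+d_M(f_1,f_2)$.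
   Context: $(\mathcal{X}_T,\|\cdot\|_{\mathcal{X}_T})$, $(\mathcal{Y}_T,\|\cdot\|_{\mathcal{Y}_T})$, $(\mathcal{X}_S,\|\cdot\|_{\mathcal{X}_S})$, $(\mathcal{Y}_S,\|\cdot\|_{\mathcal{Y}_S})$ are Banach spaces; $X_T$ is an $\mathcal{X}_T$-valued random variable. $A_S$ is a set of functions $\mathcal{X}_S\to\mathcal{Y}_S$, $A_T$ a set of functions $\mathcal{X}_T\to\mathcal{Y}_T$. $\mathbb{T}_0^X$ is a nonempty set of maps $\mathcal{X}_T\to\mathcal{X}_S$ and $\mathbb{T}_0^Y$ a nonempty set of maps $\mathcal{X}_T\times\mathcal{Y}_S\to\mathcal{Y}_T$ such that all intermediate models lie in $A_T$. $\mathcal{E}^O:A_T\to[0,\infty)$ is an output transport risk. $D$ is a metric on the set $\mathcal{P}(\mathcal{X}_S)$ of probability measures on $\mathcal{X}_S$ (the input transport risk of $T_0^X$ is $D(T_0^X\#\mathrm{Law}(X_T),\mu)$), and $\#$ denotes pushforward. $C:\mathbb{R}\times\mathbb{R}\to\mathbb{R}$ satisfies $C(0,0)=0$, is non-decreasing in each argument, and there is $L>0$ with $|C(a,b)-C(a',b')|\le L(|a-a'|+|b-b'|)$ for all $a,a',b,b'\ge0$. For a fixed constant $M>0$, $d_M(f_1,f_2):=\min\{M,\sup_{x\in\mathcal{X}_S}\|f_1(x)-f_2(x)\|_{\mathcal{Y}_S}\}$. $\mathcal{W}_p$ is the $p$-Wasserstein distance on probability measures on $\mathcal{Y}_T$ with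 respect to $\|\cdot\|_{\mathcal{Y}_T}$. *)

theory Defs
  imports "HOL-Analysis.Analysis" "HOL-Probability.Probability"
begin

definition prob_measures :: "('a::topological_space) measure set" where
  "prob_measures = {\<mu>. prob_space \<mu> \<and> sets \<mu> = sets borel}"

definition metric_on :: "'a set \<Rightarrow> ('a \<Rightarrow> 'a \<Rightarrow> real) \<Rightarrow> bool" where
  "metric_on S D \<longleftrightarrow>
     (\<forall>x\<in>S. \<forall>y\<in>S. 0 \<le> D x y \<and> D x y = D y x \<and> (D x y = 0 \<longleftrightarrow> x = y)) \<and>
     (\<forall>x\<in>S. \<forall>y\<in>S. \<forall>z\<in>S. D x z \<le> D x y + D y z)"

definition couplings :: "('a::real_normed_vector) measure \<Rightarrow> 'a measure \<Rightarrow> ('a \<times> 'a) measure set" where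
  "couplings \<mu> \<nu> = {\<pi>. prob_space \<pi> \<and> sets \<pi> = sets (borel \<Otimes>\<^sub>M borel) \<and>
                        distr \<pi> borel fst = \<mu> \<and> distr \<pi> borel snd = \<nu>}"

definition wasserstein_pow :: "real \<Rightarrow> ('a::real_normed_vector) measure \<Rightarrow> 'a measure \<Rightarrow> ennreal" where
  "wasserstein_pow p \<mu> \<nu> =
     (INF \<pi>\<in>couplings \<mu> \<nu>. \<integral>\<^sup>+ z. ennreal (norm (fst z - snd z) powr p) \<partial>\<pi>)"

definition d_M :: "real \<Rightarrow> ('a \<Rightarrow> 'b::real_normed_vector) \<Rightarrow> ('a \<Rightarrow> 'b) \<Rightarrow> real" where
  "d_M M f1 f2 = real_of_ereal (min (ereal M) (SUP x. ereal (norm (f1 x - f2 x))))"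

definition intermediate_models ::
  "('xs \<Rightarrow> 'ys) set \<Rightarrow> ('xt \<Rightarrow> 'xs) set \<Rightarrow> ('xt \<Rightarrow> 'ys \<Rightarrow> 'yt) set \<Rightarrow> ('xt \<Rightarrow> 'yt) set" where
  "intermediate_models AS TX TY =
     {(\<lambda>x. TY0 x (f (TX0 x))) | f TX0 TY0. f \<in> AS \<and> TX0 \<in> TX \<and> TY0 \<in> TY}"

definition transfer_cost ::
  "(real \<Rightarrow> real \<Rightarrow> real) \<Rightarrow> (('xt \<Rightarrow> 'yt) \<Rightarrow> real) \<Rightarrow> ('xs measure \<Rightarrow> 'xs measure \<Rightarrow> real)
   \<Rightarrow> 'xt measure \<Rightarrow> ('xt \<Rightarrow> 'xs::topological_space) set \<Rightarrow> ('xt \<Rightarrow> 'ys \<Rightarrow> 'yt) set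
   \<Rightarrow> 'xs measure \<Rightarrow> ('xs \<Rightarrow> 'ys) \<Rightarrow> real" where
  "transfer_cost C EO D lawX TX TY \<mu> f =
     (INF T\<in>TX \<times> TY. C (EO (\<lambda>x. (snd T) x (f ((fst T) x)))) (D (distr lawX borel (fst T)) \<mu>))"

end

theory Submission imports Defs begin

lemma inf_diff:
  fixes f g :: "'a \<Rightarrow> real"
  assumes ne: "A \<noteq> {}" and f0: "\<forall>T\<in>A. f T \<ge> 0" and g0: "\<forall>T\<in>A. g T \<ge> 0"
    and b: "\<forall>T\<in>A. \<bar>f T - g T\<bar> \<le> B"
  shows "\<bar>(INF T\<in>A. f T) - (INF T\<in>A. g T)\<bar> \<le> B"
proof -
  have bf: "bdd_below (f ` A)" using f0 by (auto intro: bdd_belowI2)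
  have bg: "bdd_below (g ` A)" using g0 by (auto intro: bdd_belowI2)
  have 1: "(INF T\<in>A. f T) - B \<le> (INF T\<in>A. g T)"
  proof (rule cINF_greatest[OF ne])
    fix T assume T: "T \<in> A"
    have "(INF T\<in>A. f T) \<le> f T" using cINF_lower[OF bf T] .
    then show "(INF T\<in>A. f T) - B \<le> g T" using b T by force
  qed
  have 2: "(INF T\<in>A. g T) - B \<le> (INF T\<in>A. f T)"
  proof (rule cINF_greatest[OF ne])
    fix T assume T: "T \<in> A"
    have "(INF T\<in>A. g T) \<le> g T" using cINF_lower[OF bg T] .
    then show "(INF T\<in>A. g T) - B \<le> f T" using b T by force
  qed
  show ?thesis using 1 2 by linarith
qed

lemma dM_bound:
  fixes f g :: "'a \<Rightarrow> 'b::real_normed_vector"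
  assumes M: "M > 0" and lt: "d_M M f g < M"
  shows "\<forall>x. norm (f x - g x) \<le> d_M M f g" "0 \<le> d_M M f g"
proof -
  define s where "s = (SUP x. ereal (norm (f x - g x)))"
  have up: "ereal (norm (f x - g x)) \<le> s" for x unfolding s_def by (rule SUP_upper) auto
  have s0: "0 \<le> s" using up[of undefined] by (metis ereal_less_eq(5) norm_ge_zero order_trans)
  have sM: "s < ereal M"
  proof (rule ccontr)
    assume "\<not> s < ereal M"
    then have "min (ereal M) s = ereal M" by auto
    then have "d_M M f g = M" unfolding d_M_def s_def[symmetric] by simp
    with lt show False by simp
  qed
  then have mn: "min (ereal M) s = s" by auto
  obtain r where r: "s = ereal r" using s0 sM by (cases s) auto
  have dm: "d_M M f g = r" unfolding d_M_def s_def[symmetric] using mn r by simp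
  show "\<forall>x. norm (f x - g x) \<le> d_M M f g" using up r dm by auto
  show "0 \<le> d_M M f g" using s0 r dm by auto
qed

lemma wass_bound:
  fixes law :: "'a::topological_space measure" and h1 h2 :: "'a \<Rightarrow> 'b::real_normed_vector"
  assumes P: "prob_space law" and sl: "sets law = sets borel"
    and m1: "h1 \<in> borel_measurable borel" and m2: "h2 \<in> borel_measurable borel"
    and bd: "\<forall>x. norm (h1 x - h2 x) \<le> c" and p0: "0 \<le> p"
  shows "wasserstein_pow p (distr law borel h1) (distr law borel h2) \<le> ennreal (c powr p)"
proof -
  have m1': "h1 \<in> borel_measurable law" using m1 measurable_cong_sets[OF sl refl] by blast
  have m2': "h2 \<in> borel_measurable law" using m2 measurable_cong_sets[OF sl refl] by blast
  define pr where "pr = (\<lambda>x. (h1 x, h2 x))"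
  have mp: "pr \<in> measurable law (borel \<Otimes>\<^sub>M borel)" unfolding pr_def using m1' m2' by measurable
  define \<pi> where "\<pi> = distr law (borel \<Otimes>\<^sub>M borel) pr"
  have cp: "\<pi> \<in> couplings (distr law borel h1) (distr law borel h2)"
    unfolding couplings_def
  proof (intro CollectI conjI)
    show "prob_space \<pi>" unfolding \<pi>_def by (rule prob_space.prob_space_distr[OF P mp])
    show "sets \<pi> = sets (borel \<Otimes>\<^sub>M borel)" unfolding \<pi>_def by simp
    show "distr \<pi> borel fst = distr law borel h1" unfolding \<pi>_def
      by (subst distr_distr[OF _ mp]) (auto simp: pr_def comp_def)
    show "distr \<pi> borel snd = distr law borel h2" unfolding \<pi>_def
      by (subst distr_distr[OF _ mp]) (auto simp: pr_def comp_def)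
  qed
  have "wasserstein_pow p (distr law borel h1) (distr law borel h2) \<le>
        (\<integral>\<^sup>+ z. ennreal (norm (fst z - snd z) powr p) \<partial>\<pi>)"
    unfolding wasserstein_pow_def by (rule INF_lower[OF cp])
  also have "\<dots> \<le> ennreal (c powr p)"
    unfolding nn_integral_def
  proof (rule SUP_least)
    fix g assume "g \<in> {g. simple_function \<pi> g \<and> g \<le> (\<lambda>z. ennreal (norm (fst z - snd z) powr p))}"
    then have sf: "simple_function \<pi> g" and le: "\<And>z. g z \<le> ennreal (norm (fst z - snd z) powr p)"
      by (auto simp: le_fun_def)
    have gm: "g \<in> borel_measurable (distr law (borel \<Otimes>\<^sub>M borel) pr)"
      using borel_measurable_simple_function[OF sf] unfolding \<pi>_def .
    have "integral\<^sup>S \<pi> g = integral\<^sup>N \<pi> g" by (simp add: nn_integral_eq_simple_integral[OF sf])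
    also have "\<dots> = (\<integral>\<^sup>+ x. g (pr x) \<partial>law)" unfolding \<pi>_def by (rule nn_integral_distr[OF mp gm])
    also have "\<dots> \<le> (\<integral>\<^sup>+ x. ennreal (c powr p) \<partial>law)"
    proof (intro nn_integral_mono)
      fix x
      have "g (pr x) \<le> ennreal (norm (h1 x - h2 x) powr p)" using le[of "pr x"] by (simp add: pr_def)
      also have "\<dots> \<le> ennreal (c powr p)" using bd p0 by (auto intro!: powr_mono2)
      finally show "g (pr x) \<le> ennreal (c powr p)" .
    qed
    also have "\<dots> = ennreal (c powr p)" using prob_space.emeasure_space_1[OF P] by simp
    finally show "integral\<^sup>S \<pi> g \<le> ennreal (c powr p)" .
  qed
  finally show ?thesis .
qed

theorem proposition8:
  fixes \<Omega> :: "'w measure"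
    and X :: "'w \<Rightarrow> 'xt::banach"
    and AS :: "('xs::banach \<Rightarrow> 'ys::banach) set"
    and AT :: "('xt \<Rightarrow> 'yt::banach) set"
    and TX :: "('xt \<Rightarrow> 'xs) set"
    and TY :: "('xt \<Rightarrow> 'ys \<Rightarrow> 'yt) set"
    and EO :: "('xt \<Rightarrow> 'yt) \<Rightarrow> real"
    and D :: "'xs measure \<Rightarrow> 'xs measure \<Rightarrow> real"
    and C :: "real \<Rightarrow> real \<Rightarrow> real"
    and L M LY L' p :: real
    and S :: "('xs measure \<times> ('xs \<Rightarrow> 'ys)) set"
  assumes prob: "prob_space \<Omega>"
    and X_meas: "X \<in> borel_measurable \<Omega>"
    and TX_ne: "TX \<noteq> {}" and TY_ne: "TY \<noteq> {}"
    and TX_meas: "\<And>T. T \<in> TX \<Longrightarrow> T \<in> borel_measurable borel"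
    and IM_AT: "intermediate_models AS TX TY \<subseteq> AT"
    and IM_meas: "\<And>h. h \<in> intermediate_models AS TX TY \<Longrightarrow> h \<in> borel_measurable borel"
    and EO_nonneg: "\<And>h. h \<in> AT \<Longrightarrow> 0 \<le> EO h"
    and D_metric: "metric_on prob_measures D"
    and C00: "C 0 0 = 0"
    and C_mono1: "\<And>a a' b. a \<le> a' \<Longrightarrow> C a b \<le> C a' b"
    and C_mono2: "\<And>a b b'. b \<le> b' \<Longrightarrow> C a b \<le> C a b'"
    and L_pos: "L > 0"
    and C_lip: "\<And>a a' b b'. a \<ge> 0 \<Longrightarrow> a' \<ge> 0 \<Longrightarrow> b \<ge> 0 \<Longrightarrow> b' \<ge> 0 \<Longrightarrow>
                  \<bar>C a b - C a' b'\<bar> \<le> L * (\<bar>a - a'\<bar> + \<bar>b - b'\<bar>)"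
    and M_pos: "M > 0"
    and S_sub: "S \<subseteq> prob_measures \<times> AS"
    and LY_pos: "LY > 0"
    and TY_lip: "\<And>T x1 y1 x2 y2. T \<in> TY \<Longrightarrow>
                  norm (T x1 y1 - T x2 y2) \<le> LY * (norm (x1 - x2) + norm (y1 - y2))"
    and L'_pos: "L' > 0" and p_ge: "p \<ge> 1"
    and EO_lip: "\<And>h1 h2. h1 \<in> intermediate_models AS TX TY \<Longrightarrow> h2 \<in> intermediate_models AS TX TY \<Longrightarrow>
                  ennreal \<bar>EO h1 - EO h2\<bar> \<le>
                  ennreal L' * wasserstein_pow p (distr (distr \<Omega> borel X) borel h1)
                                                 (distr (distr \<Omega> borel X) borel h2)"
  shows "\<forall>s\<in>S. \<forall>\<epsilon>>0. \<exists>\<delta>>0. \<forall>s'\<in>S.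
           D (fst s) (fst s') + d_M M (snd s) (snd s') < \<delta> \<longrightarrow>
           \<bar>transfer_cost C EO D (distr \<Omega> borel X) TX TY (fst s') (snd s')
             - transfer_cost C EO D (distr \<Omega> borel X) TX TY (fst s) (snd s)\<bar> < \<epsilon>"
proof (intro ballI allI impI)
  fix s :: "'xs measure \<times> ('xs \<Rightarrow> 'ys)" and \<epsilon> :: real
  assume sS: "s \<in> S" and eps: "\<epsilon> > 0"
  define lawX where "lawX = distr \<Omega> borel X"
  have lawP: "prob_space lawX" unfolding lawX_def by (rule prob_space.prob_space_distr[OF prob X_meas])
  have lawS: "sets lawX = sets borel" unfolding lawX_def by simp
  define K where "K = L * max (L' * LY) 1"
  have K0: "K > 0" unfolding K_def using L_pos by auto
  define \<delta> where "\<delta> = min M (min (1 / LY) (\<epsilon> / K))"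
  have d0: "\<delta> > 0" unfolding \<delta>_def using M_pos LY_pos eps K0 by auto
  show "\<exists>\<delta>>0. \<forall>s'\<in>S. D (fst s) (fst s') + d_M M (snd s) (snd s') < \<delta> \<longrightarrow>
           \<bar>transfer_cost C EO D (distr \<Omega> borel X) TX TY (fst s') (snd s')
             - transfer_cost C EO D (distr \<Omega> borel X) TX TY (fst s) (snd s)\<bar> < \<epsilon>"
  proof (intro exI[of _ \<delta>] conjI ballI impI d0)
    fix s' assume s'S: "s' \<in> S" and H: "D (fst s) (fst s') + d_M M (snd s) (snd s') < \<delta>"
    obtain \<mu> f where s: "s = (\<mu>, f)" by (cases s)
    obtain \<mu>' f' where s': "s' = (\<mu>', f')" by (cases s')
    have \<mu>P: "\<mu> \<in> prob_measures" and fA: "f \<in> AS" using sS S_sub s by auto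
    have \<mu>'P: "\<mu>' \<in> prob_measures" and f'A: "f' \<in> AS" using s'S S_sub s' by auto
    define d where "d = d_M M f f'"
    define Dm where "Dm = D \<mu> \<mu>'"
    have Dm0: "0 \<le> Dm" using D_metric \<mu>P \<mu>'P unfolding Dm_def metric_on_def by auto
    have Hd: "Dm + d < \<delta>" using H s s' unfolding Dm_def d_def by simp
    have dM: "d < M" using Hd Dm0 unfolding \<delta>_def by linarith
    have dbd: "\<forall>x. norm (f x - f' x) \<le> d" and dpos: "0 \<le> d"
      using dM_bound[OF M_pos, of f f'] dM unfolding d_def by auto
    have dLY: "LY * d \<le> 1"
    proof -
      have "d \<le> 1 / LY" using Hd Dm0 unfolding \<delta>_def by linarith
      then show ?thesis using LY_pos by (simp add: field_simps)
    qed
    define F where "F = (\<lambda>g \<mu>0 (T :: ('xt \<Rightarrow> 'xs) \<times> ('xt \<Rightarrow> 'ys \<Rightarrow> 'yt)).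
        C (EO (\<lambda>x. (snd T) x (g ((fst T) x)))) (D (distr lawX borel (fst T)) \<mu>0))"
    have Fnn: "F g \<mu>0 T \<ge> 0" if "g \<in> AS" "\<mu>0 \<in> prob_measures" "T \<in> TX \<times> TY" for g \<mu>0 T
    proof -
      have "(\<lambda>x. (snd T) x (g ((fst T) x))) \<in> intermediate_models AS TX TY"
        using that unfolding intermediate_models_def by force
      then have a0: "0 \<le> EO (\<lambda>x. (snd T) x (g ((fst T) x)))" using IM_AT EO_nonneg by blast
      have "fst T \<in> TX" using that by auto
      then have m: "fst T \<in> measurable lawX borel"
        using TX_meas[of "fst T"] measurable_cong_sets[OF lawS refl] by blast
      have "distr lawX borel (fst T) \<in> prob_measures"
        unfolding prob_measures_def using prob_space.prob_space_distr[OF lawP m] by simp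
      then have b0: "0 \<le> D (distr lawX borel (fst T)) \<mu>0"
        using D_metric that unfolding metric_on_def by auto
      have "0 = C 0 0" using C00 by simp
      also have "\<dots> \<le> C 0 (D (distr lawX borel (fst T)) \<mu>0)" by (rule C_mono2[OF b0])
      also have "\<dots> \<le> F g \<mu>0 T" unfolding F_def by (rule C_mono1[OF a0])
      finally show ?thesis .
    qed
    have Tb: "\<bar>F f' \<mu>' T - F f \<mu> T\<bar> \<le> K * (d + Dm)" if T: "T \<in> TX \<times> TY" for T
    proof -
      obtain T1 T2 where T12: "T = (T1, T2)" by (cases T)
      have T1: "T1 \<in> TX" and T2: "T2 \<in> TY" using T T12 by auto
      define h where "h = (\<lambda>x. T2 x (f (T1 x)))"
      define h' where "h' = (\<lambda>x. T2 x (f' (T1 x)))"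
      have hI: "h \<in> intermediate_models AS TX TY" unfolding h_def intermediate_models_def
        using fA T1 T2 by blast
      have h'I: "h' \<in> intermediate_models AS TX TY" unfolding h'_def intermediate_models_def
        using f'A T1 T2 by blast
      have a0: "0 \<le> EO h" "0 \<le> EO h'" using hI h'I IM_AT EO_nonneg by auto
      have m: "T1 \<in> measurable lawX borel"
        using TX_meas[OF T1] measurable_cong_sets[OF lawS refl] by auto
      define \<nu> where "\<nu> = distr lawX borel T1"
      have \<nu>P: "\<nu> \<in> prob_measures"
        unfolding prob_measures_def \<nu>_def using prob_space.prob_space_distr[OF lawP m] by simp
      have b0: "0 \<le> D \<nu> \<mu>" "0 \<le> D \<nu> \<mu>'"
        using D_metric \<nu>P \<mu>P \<mu>'P unfolding metric_on_def by auto
      have tri: "D \<nu> \<mu>' \<le> D \<nu> \<mu> + D \<mu> \<mu>'" "D \<nu> \<mu> \<le> D \<nu> \<mu>' + D \<mu>' \<mu>" "D \<mu>' \<mu> = D \<mu> \<mu>'"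
        using D_metric \<nu>P \<mu>P \<mu>'P unfolding metric_on_def by blast+
      have Db: "\<bar>D \<nu> \<mu>' - D \<nu> \<mu>\<bar> \<le> Dm" using tri unfolding Dm_def by linarith
      have hb: "\<forall>x. norm (h' x - h x) \<le> LY * d"
      proof
        fix x
        have "norm (h' x - h x) \<le> LY * (norm (x - x) + norm (f' (T1 x) - f (T1 x)))"
          unfolding h_def h'_def by (rule TY_lip[OF T2])
        also have "\<dots> \<le> LY * d" using dbd LY_pos by (simp add: norm_minus_commute)
        finally show "norm (h' x - h x) \<le> LY * d" .
      qed
      have "ennreal \<bar>EO h' - EO h\<bar> \<le> ennreal L' * wasserstein_pow p (distr (distr \<Omega> borel X) borel h')
                                                 (distr (distr \<Omega> borel X) borel h)"
        by (rule EO_lip[OF h'I hI])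
      also have "\<dots> \<le> ennreal L' * ennreal ((LY * d) powr p)"
        apply (rule mult_left_mono)
         apply (rule wass_bound[OF lawP[unfolded lawX_def] lawS[unfolded lawX_def]])
        using IM_meas[OF h'I] IM_meas[OF hI] hb p_ge by auto
      also have "\<dots> = ennreal (L' * (LY * d) powr p)" using L'_pos by (simp add: ennreal_mult)
      finally have "\<bar>EO h' - EO h\<bar> \<le> L' * (LY * d) powr p"
        using L'_pos by (subst (asm) ennreal_le_iff) auto
      moreover have "(LY * d) powr p \<le> LY * d"
      proof (cases "LY * d = 0")
        case True then show ?thesis using dpos LY_pos by (simp add: powr_def)
      next
        case False then show ?thesis using dpos LY_pos dLY p_ge
          by (intro powr_le_one_le) auto
      qed
      ultimately have Eb: "\<bar>EO h' - EO h\<bar> \<le> L' * LY * d"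
      proof -
        assume A: "\<bar>EO h' - EO h\<bar> \<le> L' * (LY * d) powr p" and B: "(LY * d) powr p \<le> LY * d"
        have "L' * (LY * d) powr p \<le> L' * (LY * d)" using B L'_pos by (intro mult_left_mono) auto
        then show ?thesis using A by (simp add: mult.assoc)
      qed
      have "\<bar>F f' \<mu>' T - F f \<mu> T\<bar> = \<bar>C (EO h') (D \<nu> \<mu>') - C (EO h) (D \<nu> \<mu>)\<bar>"
        unfolding F_def T12 h_def h'_def \<nu>_def by simp
      also have "\<dots> \<le> L * (\<bar>EO h' - EO h\<bar> + \<bar>D \<nu> \<mu>' - D \<nu> \<mu>\<bar>)"
        using C_lip a0 b0 by simp
      also have "\<dots> \<le> L * (L' * LY * d + Dm)"
        using Eb Db L_pos by (intro mult_left_mono) auto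
      also have "\<dots> \<le> K * (d + Dm)"
      proof -
        have 1: "L' * LY * d \<le> max (L' * LY) 1 * d" using dpos by (intro mult_right_mono) auto
        have 2: "Dm \<le> max (L' * LY) 1 * Dm"
        proof -
          have "1 * Dm \<le> max (L' * LY) 1 * Dm" using Dm0 by (intro mult_right_mono) auto
          then show ?thesis by simp
        qed
        have "L' * LY * d + Dm \<le> max (L' * LY) 1 * (d + Dm)" using 1 2 by (simp add: distrib_left)
        then have "L * (L' * LY * d + Dm) \<le> L * (max (L' * LY) 1 * (d + Dm))"
          using L_pos by (intro mult_left_mono) auto
        then show ?thesis unfolding K_def by (simp add: mult.assoc)
      qed
      finally show ?thesis .
    qed
    have "\<bar>(INF T\<in>TX \<times> TY. F f' \<mu>' T) - (INF T\<in>TX \<times> TY. F f \<mu> T)\<bar> \<le> K * (d + Dm)"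
      using TX_ne TY_ne Fnn fA f'A \<mu>P \<mu>'P Tb by (intro inf_diff) auto
    also have "\<dots> < K * \<delta>" using Hd K0 by simp
    also have "\<dots> \<le> K * (\<epsilon> / K)" using K0 unfolding \<delta>_def by (intro mult_left_mono) auto
    also have "\<dots> = \<epsilon>" using K0 by simp
    finally show "\<bar>transfer_cost C EO D (distr \<Omega> borel X) TX TY (fst s') (snd s')
             - transfer_cost C EO D (distr \<Omega> borel X) TX TY (fst s) (snd s)\<bar> < \<epsilon>"
      unfolding transfer_cost_def s s' F_def lawX_def by simp
  qed
qed

end
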